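(* Let $G$ be a second countable locally compact Hausdorff groupoid with a fixed left Haar system $\lambda=\{\lambda^u\}_{u\in G^0}$, and let $(\Phi,\Psi)$ be a complementary pair of $N$-functions both satisfying the $\Delta_2$-condition. Then $\check A_\Phi(G)$ is a left and right $C_0(G^0)$-module under the actions $(bh)(x)=b(d(x))h(x)$ and $(hb)(x)=h(x)b(r(x))$ for $b\in C_0(G^0)$, $h\in\check A_\Phi(G)$; that is, $bh,hb\in\check A_\Phi(G)$ for all such $b,h$.
   Context: $G^0$ is the unit space, $r(x)=xx^{-1}$, $d(x)=x^{-1}x$, $G^u=r^{-1}(u)$; the left Haar system consists of positive Radon measures $\lambda^u$ with support $G^u$, $u\mapsto\int f d\lambda^u$ continuous for $f\in C_c(G)$, and $\int f(xy)d\lambda^{d(x)}(y)=\int f(y)d\lambda^{r(x)}(y)$. An $N$-function is a continuous even convex $\Phi:\mathbb R\to[0,\infty)$ with $\Phi(x)=0$ iff $x=0$, $\Phi(x)/x\to0$ as $x\to0$, $\to\infty$ as $x\to\infty$; complementary function $\Psi(y)=\sup_{x\ge0}(x|y|-\Phi(x))$. $\Delta_2$: there is $k>0$ with $\Phi(2x)\le k\Phi(x)$ for all $x\ge0$ ($G$ non-compact), resp. for $x\ge x_0$, some $x_0>0$ ($G$ compact). For $u\in G^0$, $L^\Phi(G^u)$ is the space of measurable $f$ on $G^u$ with $\int\Phi(\alpha|f|)d\lambda^u<\infty$ for some $\alpha>0$, gauge norm $\|f\|^0_\Phi=\inf\{k>0:\int\Phi(|f|/k)d\lambda^u\le1\}$;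 similarly for $\Psi$. For $f\in C_c(G)$, $f^u=f|_{G^u}$ and $\check f(x)=f(x^{-1})$. $E_0^\Phi$ (resp. $E_0^\Psi$) is the Banach space of sections $\xi=(\xi^u)$ with $\xi^u\in L^\Phi(G^u)$ (resp. $L^\Psi(G^u)$), locally close to $C_c(G)$ in the gauge norm, with $u\mapsto\|\xi^u\|^0$ vanishing at infinity, normed by $\sup_u\|\xi^u\|^0$. $\mathcal K(G)$ is the collection of compact subsets of $G$ with nonempty interior intersecting $G^0$. For $P\in\mathcal K(G)$, $E_0^\Phi(P)$ (resp. $E_0^\Psi(P)$) is the closure in $E_0^\Phi$ (resp. $E_0^\Psi$) of $\{f\in C_c(G):\operatorname{supp}f\subseteq P\}$. For $g\in E_0^\Psi(P)$, $f\in E_0^\Phi(P)$, $(g*\check f)(x)=\int_{G^{r(x)}}g^{r(x)}(y)f^{d(x)}(x^{-1}y)d\lambda^{r(x)}(y)$. $\check A_{\Phi,P}(G)$ is the set of $h\in C_c(G)$ of the form $h=\sum_{n=1}^\infty g_n*\check f_n$ with $f_n\in E_0^\Phi(P)$, $g_n\in E_0^\Psi(P)$ and $\sum_n\|f_n\|^0_\Phi\|g_n\|^0_\Psi<\infty$, and $\check A_\Phi(G)=\bigcup_{P\in\mathcal K(G)}\check A_{\Phi,P}(G)$. *)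

theory Defs
  imports "HOL-Analysis.Analysis" "HOL-Probability.Probability"
begin

definition groupoid :: "('g \<times> 'g) set \<Rightarrow> ('g \<Rightarrow> 'g \<Rightarrow> 'g) \<Rightarrow> ('g \<Rightarrow> 'g) \<Rightarrow> bool" where
  "groupoid G2 gmul ginv \<longleftrightarrow>
     (\<forall>x y z. (x, y) \<in> G2 \<and> (y, z) \<in> G2 \<longrightarrow>
         (gmul x y, z) \<in> G2 \<and> (x, gmul y z) \<in> G2 \<and> gmul (gmul x y) z = gmul x (gmul y z)) \<and>
     (\<forall>x. ginv (ginv x) = x) \<and>
     (\<forall>x. (ginv x, x) \<in> G2) \<and>
     (\<forall>x z. (z, x) \<in> G2 \<longrightarrow> gmul (gmul z x) (ginv x) = z) \<and>
     (\<forall>x y. (x, y) \<in> G2 \<longrightarrow> gmul (ginv x) (gmul x y) = y)"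

definition topological_groupoid ::
  "('g::topological_space \<times> 'g) set \<Rightarrow> ('g \<Rightarrow> 'g \<Rightarrow> 'g) \<Rightarrow> ('g \<Rightarrow> 'g) \<Rightarrow> bool" where
  "topological_groupoid G2 gmul ginv \<longleftrightarrow>
     groupoid G2 gmul ginv \<and>
     continuous_on G2 (\<lambda>p. gmul (fst p) (snd p)) \<and> continuous_on UNIV ginv"

definition gr :: "('g \<Rightarrow> 'g \<Rightarrow> 'g) \<Rightarrow> ('g \<Rightarrow> 'g) \<Rightarrow> 'g \<Rightarrow> 'g" where
  "gr gmul ginv x = gmul x (ginv x)"

definition gd :: "('g \<Rightarrow> 'g \<Rightarrow> 'g) \<Rightarrow> ('g \<Rightarrow> 'g) \<Rightarrow> 'g \<Rightarrow> 'g" where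
  "gd gmul ginv x = gmul (ginv x) x"

definition unit_space :: "('g \<Rightarrow> 'g \<Rightarrow> 'g) \<Rightarrow> ('g \<Rightarrow> 'g) \<Rightarrow> 'g set" where
  "unit_space gmul ginv = range (gr gmul ginv)"

definition fsupp :: "('a::topological_space \<Rightarrow> complex) \<Rightarrow> 'a set" where
  "fsupp f = closure {x. f x \<noteq> 0}"

definition Cc :: "('a::topological_space \<Rightarrow> complex) set" where
  "Cc = {f. continuous_on UNIV f \<and> compact (fsupp f)}"

text \<open>C_0(G^0): continuous on G^0, vanishing at infinity on G^0 (values off G^0 irrelevant).\<close>
definition C0_on :: "'a::topological_space set \<Rightarrow> ('a \<Rightarrow> complex) set" where
  "C0_on S = {b. continuous_on S b \<and> (\<forall>e>0. compact {u\<in>S. norm (b u) \<ge> e})}"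

definition measure_support :: "'a::topological_space measure \<Rightarrow> 'a set" where
  "measure_support M = UNIV - \<Union>{U. open U \<and> emeasure M U = 0}"

definition radon_measure :: "'a::topological_space measure \<Rightarrow> bool" where
  "radon_measure M \<longleftrightarrow>
     sets M = sets borel \<and>
     (\<forall>K. compact K \<longrightarrow> emeasure M K < \<infinity>) \<and>
     (\<forall>B \<in> sets borel. emeasure M B = (INF U\<in>{U. open U \<and> B \<subseteq> U}. emeasure M U)) \<and>
     (\<forall>U. open U \<longrightarrow> emeasure M U = (SUP K\<in>{K. compact K \<and> K \<subseteq> U}. emeasure M K))"

definition left_haar_system ::
  "('g::topological_space \<Rightarrow> 'g \<Rightarrow> 'g) \<Rightarrow> ('g \<Rightarrow> 'g) \<Rightarrow> ('g \<Rightarrow> 'g measure) \<Rightarrow> bool" where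
  "left_haar_system gmul ginv lam \<longleftrightarrow>
     (\<forall>u\<in>unit_space gmul ginv. radon_measure (lam u) \<and>
        measure_support (lam u) = {x. gr gmul ginv x = u}) \<and>
     (\<forall>f\<in>Cc. continuous_on (unit_space gmul ginv) (\<lambda>u. \<integral>y. f y \<partial>lam u)) \<and>
     (\<forall>f\<in>Cc. \<forall>x.
        (\<integral>y. (if gr gmul ginv y = gd gmul ginv x then f (gmul x y) else 0) \<partial>lam (gd gmul ginv x))
        = (\<integral>y. f y \<partial>lam (gr gmul ginv x)))"

definition N_function :: "(real \<Rightarrow> real) \<Rightarrow> bool" where
  "N_function \<Phi> \<longleftrightarrow>
     continuous_on UNIV \<Phi> \<and> (\<forall>x. \<Phi> (-x) = \<Phi> x) \<and> convex_on UNIV \<Phi> \<and>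
     (\<forall>x. \<Phi> x \<ge> 0) \<and> (\<forall>x. \<Phi> x = 0 \<longleftrightarrow> x = 0) \<and>
     ((\<lambda>x. \<Phi> x / x) \<longlongrightarrow> 0) (at 0) \<and>
     filterlim (\<lambda>x. \<Phi> x / x) at_top at_top"

definition complementary :: "(real \<Rightarrow> real) \<Rightarrow> (real \<Rightarrow> real)" where
  "complementary \<Phi> = (\<lambda>y. SUP x\<in>{0..}. x * \<bar>y\<bar> - \<Phi> x)"

definition delta2 :: "bool \<Rightarrow> (real \<Rightarrow> real) \<Rightarrow> bool" where
  "delta2 G_compact \<Phi> \<longleftrightarrow>
     (if G_compact then (\<exists>k>0. \<exists>x0>0. \<forall>x\<ge>x0. \<Phi> (2 * x) \<le> k * \<Phi> x)
      else (\<exists>k>0. \<forall>x\<ge>0. \<Phi> (2 * x) \<le> k * \<Phi> x))"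

text \<open>A function on G^u is represented by a function on 'g whose values off G^u are ignored.\<close>
definition restr :: "('g \<Rightarrow> 'g \<Rightarrow> 'g) \<Rightarrow> ('g \<Rightarrow> 'g) \<Rightarrow> 'g \<Rightarrow> ('g \<Rightarrow> complex) \<Rightarrow> 'g \<Rightarrow> complex" where
  "restr gmul ginv u f = (\<lambda>y. if gr gmul ginv y = u then f y else 0)"

definition in_orlicz ::
  "('g \<Rightarrow> 'g \<Rightarrow> 'g) \<Rightarrow> ('g \<Rightarrow> 'g) \<Rightarrow> ('g \<Rightarrow> 'g measure) \<Rightarrow> (real \<Rightarrow> real) \<Rightarrow> 'g
     \<Rightarrow> ('g \<Rightarrow> complex) \<Rightarrow> bool" where
  "in_orlicz gmul ginv lam \<Phi> u f \<longleftrightarrow>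
     restr gmul ginv u f \<in> borel_measurable (lam u) \<and>
     (\<exists>\<alpha>>0. (\<integral>\<^sup>+y. ennreal (\<Phi> (\<alpha> * norm (restr gmul ginv u f y))) \<partial>lam u) < \<infinity>)"

definition gauge_norm ::
  "('g \<Rightarrow> 'g \<Rightarrow> 'g) \<Rightarrow> ('g \<Rightarrow> 'g) \<Rightarrow> ('g \<Rightarrow> 'g measure) \<Rightarrow> (real \<Rightarrow> real) \<Rightarrow> 'g
     \<Rightarrow> ('g \<Rightarrow> complex) \<Rightarrow> real" where
  "gauge_norm gmul ginv lam \<Phi> u f =
     Inf {k. 0 < k \<and> (\<integral>\<^sup>+y. ennreal (\<Phi> (norm (restr gmul ginv u f y) / k)) \<partial>lam u) \<le> 1}"

text \<open>Sections xi = (xi^u) are represented as xi :: 'g => 'g => complex, xi u being xi^u.\<close>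

definition E0 ::
  "('g::topological_space \<Rightarrow> 'g \<Rightarrow> 'g) \<Rightarrow> ('g \<Rightarrow> 'g) \<Rightarrow> ('g \<Rightarrow> 'g measure) \<Rightarrow> (real \<Rightarrow> real)
     \<Rightarrow> ('g \<Rightarrow> 'g \<Rightarrow> complex) set" where
  "E0 gmul ginv lam \<Phi> = {\<xi>.
     (\<forall>u\<in>unit_space gmul ginv. in_orlicz gmul ginv lam \<Phi> u (\<xi> u)) \<and>
     (\<forall>u0\<in>unit_space gmul ginv. \<forall>e>0. \<exists>f\<in>Cc. \<exists>U. open U \<and> u0 \<in> U \<and>
        (\<forall>u\<in>U \<inter> unit_space gmul ginv. gauge_norm gmul ginv lam \<Phi> u (\<lambda>y. \<xi> u y - f y) < e)) \<and>
     (\<forall>e>0. compact {u\<in>unit_space gmul ginv. gauge_norm gmul ginv lam \<Phi> u (\<xi> u) \<ge> e})}"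

definition E0_norm ::
  "('g \<Rightarrow> 'g \<Rightarrow> 'g) \<Rightarrow> ('g \<Rightarrow> 'g) \<Rightarrow> ('g \<Rightarrow> 'g measure) \<Rightarrow> (real \<Rightarrow> real)
     \<Rightarrow> ('g \<Rightarrow> 'g \<Rightarrow> complex) \<Rightarrow> real" where
  "E0_norm gmul ginv lam \<Phi> \<xi> = (SUP u\<in>unit_space gmul ginv. gauge_norm gmul ginv lam \<Phi> u (\<xi> u))"

text \<open>E_0(P): closure in E_0 of the C_c functions supported in P (viewed as sections u |-> f|G^u).\<close>
definition E0P ::
  "('g::topological_space \<Rightarrow> 'g \<Rightarrow> 'g) \<Rightarrow> ('g \<Rightarrow> 'g) \<Rightarrow> ('g \<Rightarrow> 'g measure) \<Rightarrow> (real \<Rightarrow> real)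
     \<Rightarrow> 'g set \<Rightarrow> ('g \<Rightarrow> 'g \<Rightarrow> complex) set" where
  "E0P gmul ginv lam \<Phi> P = {\<xi> \<in> E0 gmul ginv lam \<Phi>.
     \<forall>e>0. \<exists>f\<in>Cc. fsupp f \<subseteq> P \<and> E0_norm gmul ginv lam \<Phi> (\<lambda>u y. \<xi> u y - f y) < e}"

definition conv_check ::
  "('g \<Rightarrow> 'g \<Rightarrow> 'g) \<Rightarrow> ('g \<Rightarrow> 'g) \<Rightarrow> ('g \<Rightarrow> 'g measure)
     \<Rightarrow> ('g \<Rightarrow> 'g \<Rightarrow> complex) \<Rightarrow> ('g \<Rightarrow> 'g \<Rightarrow> complex) \<Rightarrow> 'g \<Rightarrow> complex" where
  "conv_check gmul ginv lam g f x =
     (\<integral>y. (if gr gmul ginv y = gr gmul ginv x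
            then g (gr gmul ginv x) y * f (gd gmul ginv x) (gmul (ginv x) y) else 0)
       \<partial>lam (gr gmul ginv x))"

definition K_sets :: "('g::topological_space \<Rightarrow> 'g \<Rightarrow> 'g) \<Rightarrow> ('g \<Rightarrow> 'g) \<Rightarrow> 'g set set" where
  "K_sets gmul ginv = {P. compact P \<and> interior P \<inter> unit_space gmul ginv \<noteq> {}}"

definition A_check_P ::
  "('g::topological_space \<Rightarrow> 'g \<Rightarrow> 'g) \<Rightarrow> ('g \<Rightarrow> 'g) \<Rightarrow> ('g \<Rightarrow> 'g measure) \<Rightarrow> (real \<Rightarrow> real)
     \<Rightarrow> 'g set \<Rightarrow> ('g \<Rightarrow> complex) set" where
  "A_check_P gmul ginv lam \<Phi> P = {h \<in> Cc. \<exists>fs gs.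
     (\<forall>n. fs n \<in> E0P gmul ginv lam \<Phi> P \<and> gs n \<in> E0P gmul ginv lam (complementary \<Phi>) P) \<and>
     summable (\<lambda>n. E0_norm gmul ginv lam \<Phi> (fs n) * E0_norm gmul ginv lam (complementary \<Phi>) (gs n)) \<and>
     (\<forall>x. (\<lambda>n. conv_check gmul ginv lam (gs n) (fs n) x) sums h x)}"

definition A_check ::
  "('g::topological_space \<Rightarrow> 'g \<Rightarrow> 'g) \<Rightarrow> ('g \<Rightarrow> 'g) \<Rightarrow> ('g \<Rightarrow> 'g measure) \<Rightarrow> (real \<Rightarrow> real)
     \<Rightarrow> ('g \<Rightarrow> complex) set" where
  "A_check gmul ginv lam \<Phi> = (\<Union>P\<in>K_sets gmul ginv. A_check_P gmul ginv lam \<Phi> P)"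

end

theory Submission
  imports Defs
begin

definition gset :: "'a measure \<Rightarrow> (real \<Rightarrow> real) \<Rightarrow> ('a \<Rightarrow> complex) \<Rightarrow> real set" where
  "gset M \<Phi> a = {k. 0 < k \<and> (\<integral>\<^sup>+y. ennreal (\<Phi> (norm (a y) / k)) \<partial>M) \<le> 1}"

lemma gauge_norm_gset:
  "gauge_norm gmul ginv lam \<Phi> u f = Inf (gset (lam u) \<Phi> (restr gmul ginv u f))"
  by (simp add: gauge_norm_def gset_def)

locale Nf = fixes \<Phi> :: "real \<Rightarrow> real" assumes N: "N_function \<Phi>"
begin

lemma nonneg: "0 \<le> \<Phi> x" using N by (simp add: N_function_def)
lemma zero[simp]: "\<Phi> 0 = 0" using N by (simp add: N_function_def)
lemma cont: "continuous_on UNIV \<Phi>" using N by (simp add: N_function_def)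
lemma convex: "0 \<le> t \<Longrightarrow> t \<le> 1 \<Longrightarrow> \<Phi> (t*x + (1-t)*y) \<le> t * \<Phi> x + (1-t) * \<Phi> y"
proof -
  assume t: "0 \<le> t" "t \<le> 1"
  have c: "convex_on UNIV \<Phi>" using N by (simp add: N_function_def)
  show ?thesis using convex_onD[OF c, of "1-t" x y] t by simp
qed
lemma scale: "0 \<le> t \<Longrightarrow> t \<le> 1 \<Longrightarrow> \<Phi> (t*x) \<le> t * \<Phi> x"
  using convex[of t x 0] by simp
lemma mono: assumes "0 \<le> x" "x \<le> y" shows "\<Phi> x \<le> \<Phi> y"
proof (cases "y = 0")
  case True then show ?thesis using assms by simp
next
  case False
  then have y: "0 < y" using assms by simp
  have "\<Phi> x = \<Phi> ((x/y)*y)" using y by simp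
  also have "\<dots> \<le> (x/y) * \<Phi> y" using assms y by (intro scale) auto
  also have "\<dots> \<le> \<Phi> y"
  proof -
    have "x * \<Phi> y \<le> y * \<Phi> y" using assms nonneg[of y] by (intro mult_right_mono)
    then show ?thesis using y by (simp add: divide_le_eq mult.commute)
  qed
  finally show ?thesis .
qed

lemma meas: assumes "a \<in> borel_measurable M"
  shows "(\<lambda>y. ennreal (\<Phi> (norm (a y) / k))) \<in> borel_measurable M"
proof -
  have "(\<lambda>y. norm (a y) / k) \<in> borel_measurable M" using assms by measurable
  then have "(\<lambda>y. \<Phi> (norm (a y) / k)) \<in> borel_measurable M"
    by (rule borel_measurable_continuous_on[OF cont])
  then show ?thesis by measurable
qed

lemma meas': assumes "a \<in> borel_measurable M"
  shows "(\<lambda>y. ennreal (\<Phi> (k * norm (a y)))) \<in> borel_measurable M"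
proof -
  have "(\<lambda>y. k * norm (a y)) \<in> borel_measurable M" using assms by measurable
  then have "(\<lambda>y. \<Phi> (k * norm (a y))) \<in> borel_measurable M"
    by (rule borel_measurable_continuous_on[OF cont])
  then show ?thesis by measurable
qed

lemma gset_up: assumes "k \<in> gset M \<Phi> a" "k \<le> k'" shows "k' \<in> gset M \<Phi> a"
proof -
  have k: "0 < k" using assms by (simp add: gset_def)
  have "(\<integral>\<^sup>+y. ennreal (\<Phi> (norm (a y) / k')) \<partial>M) \<le> (\<integral>\<^sup>+y. ennreal (\<Phi> (norm (a y) / k)) \<partial>M)"
    using k assms(2) by (intro nn_integral_mono ennreal_leI mono) (auto intro: divide_left_mono)
  also have "\<dots> \<le> 1" using assms by (simp add: gset_def)
  finally show ?thesis using k assms(2) by (simp add: gset_def)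
qed

lemma gset_bdd: "bdd_below (gset M \<Phi> a)"
  by (auto simp: gset_def bdd_below_def intro!: exI[of _ 0])

lemma gset_nonneg: "gset M \<Phi> a \<noteq> {} \<Longrightarrow> 0 \<le> Inf (gset M \<Phi> a)"
  by (rule cInf_greatest) (auto simp: gset_def)

lemma gset_le: "k \<in> gset M \<Phi> a \<Longrightarrow> Inf (gset M \<Phi> a) \<le> k"
  by (rule cInf_lower[OF _ gset_bdd])

lemma gset_bound:
  assumes "0 < \<alpha>" "0 \<le> C" "a \<in> borel_measurable M"
    "(\<integral>\<^sup>+y. ennreal (\<Phi> (\<alpha> * norm (a y))) \<partial>M) \<le> ennreal C"
  shows "max 1 C / \<alpha> \<in> gset M \<Phi> a"
proof -
  define c where "c = max 1 C"
  have c: "1 \<le> c" "C \<le> c" by (auto simp: c_def)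
  have pt: "\<Phi> (norm (a y) / (c/\<alpha>)) \<le> (1/c) * \<Phi> (\<alpha> * norm (a y))" for y
  proof -
    have "norm (a y) / (c/\<alpha>) = (1/c) * (\<alpha> * norm (a y))" using c assms(1) by simp
    then show ?thesis using c by (simp only:) (rule scale, auto)
  qed
  have "(\<integral>\<^sup>+y. ennreal (\<Phi> (norm (a y) / (c/\<alpha>))) \<partial>M)
      \<le> (\<integral>\<^sup>+y. ennreal (1/c) * ennreal (\<Phi> (\<alpha> * norm (a y))) \<partial>M)"
    using pt c nonneg by (intro nn_integral_mono) (simp add: ennreal_mult[symmetric])
  also have "\<dots> = ennreal (1/c) * (\<integral>\<^sup>+y. ennreal (\<Phi> (\<alpha> * norm (a y))) \<partial>M)"
    by (rule nn_integral_cmult[OF meas'[OF assms(3)]])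
  also have "\<dots> \<le> ennreal (1/c) * ennreal C" using assms(4) by (rule mult_left_mono) simp
  also have "\<dots> = ennreal (C/c)" using c assms(2) by (simp add: ennreal_mult[symmetric])
  also have "\<dots> \<le> 1" using c assms(2) by (simp add: divide_le_eq_1)
  finally show ?thesis using c assms(1) by (simp add: gset_def c_def)
qed


lemma gset_cmp:
  assumes ne: "gset M \<Phi> a \<noteq> {}" and c: "0 \<le> c" and le: "\<And>y. norm (a' y) \<le> c * norm (a y)"
  shows "gset M \<Phi> a' \<noteq> {}" "Inf (gset M \<Phi> a') \<le> c * Inf (gset M \<Phi> a)"
proof -
  have key: "c*k + \<epsilon> \<in> gset M \<Phi> a'" if k: "k \<in> gset M \<Phi> a" and \<epsilon>: "0<\<epsilon>" for k \<epsilon>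
  proof -
    have k0: "0<k" using k by (simp add: gset_def)
    have pos: "0 < c*k + \<epsilon>" using k0 \<epsilon> c by (simp add: add_nonneg_pos)
    have pt: "\<Phi> (norm (a' y)/(c*k+\<epsilon>)) \<le> \<Phi> (norm (a y)/k)" for y
    proof (rule mono)
      show "0 \<le> norm (a' y)/(c*k+\<epsilon>)" using pos by simp
      have "norm (a' y)/(c*k+\<epsilon>) \<le> c * norm (a y)/(c*k+\<epsilon>)"
        using le[of y] pos by (simp add: divide_right_mono)
      also have "\<dots> \<le> norm (a y)/k"
      proof -
        have "c * norm (a y) * k \<le> norm (a y) * (c*k+\<epsilon>)"
          using \<epsilon> by (simp add: algebra_simps)
        then show ?thesis using pos k0 by (simp add: divide_simps)
      qed
      finally show "norm (a' y)/(c*k+\<epsilon>) \<le> norm (a y)/k" .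
    qed
    have "(\<integral>\<^sup>+y. ennreal (\<Phi> (norm (a' y) / (c*k+\<epsilon>))) \<partial>M) \<le> (\<integral>\<^sup>+y. ennreal (\<Phi> (norm (a y) / k)) \<partial>M)"
      using pt by (intro nn_integral_mono ennreal_leI) auto
    also have "\<dots> \<le> 1" using k by (simp add: gset_def)
    finally show ?thesis using pos by (simp add: gset_def)
  qed
  obtain k0 where k0: "k0 \<in> gset M \<Phi> a" using ne by auto
  show "gset M \<Phi> a' \<noteq> {}" using key[OF k0, of 1] by auto
  show "Inf (gset M \<Phi> a') \<le> c * Inf (gset M \<Phi> a)"
  proof (rule field_le_epsilon)
    fix e :: real assume e: "0 < e"
    define \<delta> where "\<delta> = e/(c+1)"
    have \<delta>: "0 < \<delta>" using e c by (simp add: \<delta>_def)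
    obtain k where k: "k \<in> gset M \<Phi> a" "k < Inf (gset M \<Phi> a) + \<delta>"
      using cInf_lessD[OF ne, of "Inf (gset M \<Phi> a) + \<delta>"] \<delta> by auto
    have "Inf (gset M \<Phi> a') \<le> c*k+\<delta>" by (rule gset_le[OF key[OF k(1) \<delta>]])
    also have "\<dots> \<le> c*(Inf (gset M \<Phi> a) + \<delta>) + \<delta>" using k(2) c by (simp add: mult_left_mono)
    also have "\<dots> = c * Inf (gset M \<Phi> a) + (c+1)*\<delta>" by (simp add: algebra_simps)
    also have "(c+1)*\<delta> = e" using c by (simp add: \<delta>_def)
    finally show "Inf (gset M \<Phi> a') \<le> c * Inf (gset M \<Phi> a) + e" .
  qed
qed

lemma gset_tri:
  assumes ne1: "gset M \<Phi> a1 \<noteq> {}" and ne2: "gset M \<Phi> a2 \<noteq> {}"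
    and m1: "a1 \<in> borel_measurable M" and m2: "a2 \<in> borel_measurable M"
    and le: "\<And>y. norm (a y) \<le> norm (a1 y) + norm (a2 y)"
  shows "gset M \<Phi> a \<noteq> {}" "Inf (gset M \<Phi> a) \<le> Inf (gset M \<Phi> a1) + Inf (gset M \<Phi> a2)"
proof -
  have key: "k1 + k2 \<in> gset M \<Phi> a" if k1: "k1 \<in> gset M \<Phi> a1" and k2: "k2 \<in> gset M \<Phi> a2" for k1 k2
  proof -
    have p1: "0<k1" using k1 by (simp add: gset_def)
    have p2: "0<k2" using k2 by (simp add: gset_def)
    define t where "t = k1/(k1+k2)"
    have t: "0 \<le> t" "t \<le> 1" "1 - t = k2/(k1+k2)" using p1 p2 by (auto simp: t_def field_simps)
    have pt: "\<Phi> (norm (a y)/(k1+k2)) \<le> t * \<Phi> (norm (a1 y)/k1) + (1-t) * \<Phi> (norm (a2 y)/k2)" for y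
    proof -
      have "norm (a y)/(k1+k2) \<le> (norm (a1 y) + norm (a2 y))/(k1+k2)"
        using le[of y] p1 p2 by (simp add: divide_right_mono)
      also have "\<dots> = t * (norm (a1 y)/k1) + (1-t) * (norm (a2 y)/k2)"
      proof -
        have "t * (norm (a1 y)/k1) = norm (a1 y)/(k1+k2)" using p1 by (simp add: t_def)
        moreover have "(1-t) * (norm (a2 y)/k2) = norm (a2 y)/(k1+k2)" using p2 t(3) by simp
        ultimately show ?thesis by (simp add: add_divide_distrib)
      qed
      finally have "\<Phi> (norm (a y)/(k1+k2)) \<le> \<Phi> (t * (norm (a1 y)/k1) + (1-t) * (norm (a2 y)/k2))"
        using p1 p2 by (intro mono) auto
      also have "\<dots> \<le> t * \<Phi> (norm (a1 y)/k1) + (1-t) * \<Phi> (norm (a2 y)/k2)"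
        using t by (intro convex) auto
      finally show ?thesis .
    qed
    have mA[measurable]: "(\<lambda>y. ennreal (\<Phi> (norm (a1 y)/k1))) \<in> borel_measurable M" by (rule meas[OF m1])
    have mB[measurable]: "(\<lambda>y. ennreal (\<Phi> (norm (a2 y)/k2))) \<in> borel_measurable M" by (rule meas[OF m2])
    have "(\<integral>\<^sup>+y. ennreal (\<Phi> (norm (a y) / (k1+k2))) \<partial>M)
       \<le> (\<integral>\<^sup>+y. ennreal t * ennreal (\<Phi> (norm (a1 y)/k1)) + ennreal (1-t) * ennreal (\<Phi> (norm (a2 y)/k2)) \<partial>M)"
    proof (intro nn_integral_mono)
      fix y
      have "ennreal (\<Phi> (norm (a y) / (k1+k2))) \<le> ennreal (t * \<Phi> (norm (a1 y)/k1) + (1-t) * \<Phi> (norm (a2 y)/k2))"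
        using pt[of y] by (rule ennreal_leI)
      also have "\<dots> = ennreal t * ennreal (\<Phi> (norm (a1 y)/k1)) + ennreal (1-t) * ennreal (\<Phi> (norm (a2 y)/k2))"
        using t(1,2) nonneg by (simp add: ennreal_mult ennreal_plus)
      finally show "ennreal (\<Phi> (norm (a y) / (k1+k2))) \<le> ennreal t * ennreal (\<Phi> (norm (a1 y)/k1)) + ennreal (1-t) * ennreal (\<Phi> (norm (a2 y)/k2))" .
    qed
    also have "\<dots> = ennreal t * (\<integral>\<^sup>+y. ennreal (\<Phi> (norm (a1 y)/k1)) \<partial>M) + ennreal (1-t) * (\<integral>\<^sup>+y. ennreal (\<Phi> (norm (a2 y)/k2)) \<partial>M)"
      by (simp add: nn_integral_add nn_integral_cmult)
    also have "\<dots> \<le> ennreal t * 1 + ennreal (1-t) * 1"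
      using k1 k2 by (intro add_mono mult_left_mono) (auto simp: gset_def)
    also have "\<dots> = 1" using t by (simp add: ennreal_plus[symmetric] del: ennreal_plus)
    finally show ?thesis using p1 p2 by (simp add: gset_def)
  qed
  obtain k1 where k1: "k1 \<in> gset M \<Phi> a1" using ne1 by auto
  obtain k2 where k2: "k2 \<in> gset M \<Phi> a2" using ne2 by auto
  show "gset M \<Phi> a \<noteq> {}" using key[OF k1 k2] by auto
  show "Inf (gset M \<Phi> a) \<le> Inf (gset M \<Phi> a1) + Inf (gset M \<Phi> a2)"
  proof (rule field_le_epsilon)
    fix e :: real assume e: "0 < e"
    obtain k1 where k1: "k1 \<in> gset M \<Phi> a1" "k1 < Inf (gset M \<Phi> a1) + e/2"
      using cInf_lessD[OF ne1, of "Inf (gset M \<Phi> a1) + e/2"] e by auto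
    obtain k2 where k2: "k2 \<in> gset M \<Phi> a2" "k2 < Inf (gset M \<Phi> a2) + e/2"
      using cInf_lessD[OF ne2, of "Inf (gset M \<Phi> a2) + e/2"] e by auto
    have "Inf (gset M \<Phi> a) \<le> k1 + k2" by (rule gset_le[OF key[OF k1(1) k2(1)]])
    then show "Inf (gset M \<Phi> a) \<le> Inf (gset M \<Phi> a1) + Inf (gset M \<Phi> a2) + e" using k1 k2 by simp
  qed
qed

end


lemma compact_closed_sub: "compact S \<Longrightarrow> closed T \<Longrightarrow> T \<subseteq> S \<Longrightarrow> compact T"
  using compact_Int_closed[of S T] by (simp add: Int_absorb1)

locale GP =
  fixes G2 :: "('g::{t2_space, second_countable_topology} \<times> 'g) set"
    and gmul :: "'g \<Rightarrow> 'g \<Rightarrow> 'g" and ginv :: "'g \<Rightarrow> 'g"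
    and lam :: "'g \<Rightarrow> 'g measure"
  assumes tg: "topological_groupoid G2 gmul ginv"
    and haar: "left_haar_system gmul ginv lam"
begin

abbreviation "G0 \<equiv> unit_space gmul ginv"
abbreviation "rr \<equiv> gr gmul ginv"
abbreviation "dd \<equiv> gd gmul ginv"

lemma ginv_ginv[simp]: "ginv (ginv x) = x"
  using tg by (simp add: topological_groupoid_def groupoid_def)

lemma inv_pair: "(x, ginv x) \<in> G2"
proof -
  have "\<forall>x. (ginv x, x) \<in> G2" using tg by (simp add: topological_groupoid_def groupoid_def)
  then have "(ginv (ginv x), ginv x) \<in> G2" by blast
  then show ?thesis by simp
qed

lemma rr_cont: "continuous_on UNIV rr"
proof -
  have m: "continuous_on G2 (\<lambda>p. gmul (fst p) (snd p))" and i: "continuous_on UNIV ginv"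
    using tg by (auto simp: topological_groupoid_def)
  have "continuous_on UNIV (\<lambda>x. (x, ginv x))" by (intro continuous_on_Pair continuous_on_id i)
  from continuous_on_compose2[OF m this] inv_pair show ?thesis
    by (auto simp: gr_def[abs_def])
qed

lemma dd_eq: "dd x = rr (ginv x)" by (simp add: gd_def gr_def)

lemma dd_cont: "continuous_on UNIV dd"
proof -
  have i: "continuous_on UNIV ginv" using tg by (auto simp: topological_groupoid_def)
  from continuous_on_compose2[OF rr_cont i] show ?thesis by (simp add: dd_eq[abs_def])
qed

lemma rr_G0[simp]: "rr x \<in> G0" by (simp add: unit_space_def)
lemma dd_G0[simp]: "dd x \<in> G0" by (simp add: dd_eq)

lemma comp_rr_cont: "continuous_on G0 b \<Longrightarrow> continuous_on UNIV (\<lambda>x. b (rr x))"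
  by (rule continuous_on_compose2[OF _ rr_cont]) auto
lemma comp_dd_cont: "continuous_on G0 b \<Longrightarrow> continuous_on UNIV (\<lambda>x. b (dd x))"
  by (rule continuous_on_compose2[OF _ dd_cont]) auto

lemma haar_cont: "f \<in> Cc \<Longrightarrow> continuous_on G0 (\<lambda>u. \<integral>y. f y \<partial>lam u)"
  using haar unfolding left_haar_system_def by blast

lemma radon: "u \<in> G0 \<Longrightarrow> radon_measure (lam u)"
  using haar by (simp add: left_haar_system_def)
lemma sets_lam: "u \<in> G0 \<Longrightarrow> sets (lam u) = sets borel"
  using radon by (simp add: radon_measure_def)
lemma space_lam: "u \<in> G0 \<Longrightarrow> space (lam u) = UNIV"
  using sets_eq_imp_space_eq[OF sets_lam] by simp
lemma fin_lam: "u \<in> G0 \<Longrightarrow> compact K \<Longrightarrow> emeasure (lam u) K < \<infinity>"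
  using radon by (simp add: radon_measure_def)
lemma supp_lam: "u \<in> G0 \<Longrightarrow> measure_support (lam u) = {x. rr x = u}"
  using haar by (simp add: left_haar_system_def)

lemma meas_lam: assumes u: "u \<in> G0" and f: "f \<in> borel_measurable borel"
  shows "f \<in> borel_measurable (lam u)"
  by (subst measurable_cong_sets[OF sets_lam[OF u] refl]) (rule f)

lemma closed_fibre: "closed {y. rr y = u}"
  by (rule closed_Collect_eq[OF rr_cont continuous_on_const])

lemma restr_meas:
  assumes u: "u \<in> G0" and f: "f \<in> borel_measurable (lam u)"
  shows "restr gmul ginv u f \<in> borel_measurable (lam u)"
proof -
  have "{y. rr y = u} \<inter> space (lam u) \<in> sets (lam u)"
    using u closed_fibre[of u] by (simp add: space_lam sets_lam)
  from measurable_If_set[OF f _ this, of "\<lambda>_. 0"] show ?thesis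
    by (simp add: restr_def[abs_def])
qed

lemma Cc_cont: "f \<in> Cc \<Longrightarrow> continuous_on UNIV f" by (simp add: Cc_def)
lemma Cc_compact: "f \<in> Cc \<Longrightarrow> compact (fsupp f)" by (simp add: Cc_def)

lemma Cc_meas: "u \<in> G0 \<Longrightarrow> f \<in> Cc \<Longrightarrow> f \<in> borel_measurable (lam u)"
  by (rule meas_lam) (auto intro: borel_measurable_continuous_onI Cc_cont)

lemma null_off: assumes u: "u \<in> G0" shows "UNIV - {y. rr y = u} \<in> null_sets (lam u)"
proof -
  define F where "F = {U. open U \<and> emeasure (lam u) U = 0}"
  have eq: "UNIV - {y. rr y = u} = \<Union>F"
    using supp_lam[OF u] by (auto simp: measure_support_def F_def)
  obtain F' where F': "F' \<subseteq> F" "countable F'" "\<Union>F' = \<Union>F"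
    by (rule Lindelof[of F]) (auto simp: F_def)
  have "\<Union>((\<lambda>x. x) ` F') \<in> null_sets (lam u)"
  proof (rule null_sets_UN'[OF F'(2)])
    fix U assume "U \<in> F'"
    then have "open U" "emeasure (lam u) U = 0" using F'(1) by (auto simp: F_def)
    then show "U \<in> null_sets (lam u)" using u by (intro null_setsI) (auto simp: sets_lam)
  qed
  then show ?thesis using eq F'(3) by simp
qed

lemma C0_bound: assumes b: "b \<in> C0_on G0" shows "\<exists>M>0. \<forall>u\<in>G0. norm (b u) \<le> M"
proof -
  have bc: "continuous_on G0 b" and S: "compact {u\<in>G0. norm (b u) \<ge> 1}" using b by (auto simp: C0_on_def)
  have "compact (b ` {u\<in>G0. norm (b u) \<ge> 1})"
    by (rule compact_continuous_image[OF continuous_on_subset[OF bc] S]) auto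
  from compact_imp_bounded[OF this] obtain a where a: "\<forall>z\<in>b ` {u\<in>G0. norm (b u) \<ge> 1}. norm z \<le> a"
    unfolding bounded_iff by blast
  have "norm (b u) \<le> max 1 a" if u: "u \<in> G0" for u
  proof (cases "norm (b u) \<ge> 1")
    case True then show ?thesis using a u by force
  next
    case False then show ?thesis by simp
  qed
  then show ?thesis by (intro exI[of _ "max 1 a"]) auto
qed

lemma Cc_left: assumes b: "continuous_on G0 b" and h: "h \<in> Cc"
  shows "(\<lambda>x. b (dd x) * h x) \<in> Cc"
proof -
  have sub: "fsupp (\<lambda>x. b (dd x) * h x) \<subseteq> fsupp h" unfolding fsupp_def by (rule closure_mono) auto
  have "closed (fsupp (\<lambda>x. b (dd x) * h x))" by (simp add: fsupp_def)
  then have "compact (fsupp (\<lambda>x. b (dd x) * h x))" using compact_closed_sub[OF Cc_compact[OF h] _ sub] by blast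
  moreover have "continuous_on UNIV (\<lambda>x. b (dd x) * h x)"
    by (rule continuous_on_mult[OF comp_dd_cont[OF b] Cc_cont[OF h]])
  ultimately show ?thesis by (simp add: Cc_def)
qed

lemma Cc_right: assumes b: "continuous_on G0 b" and h: "h \<in> Cc"
  shows "(\<lambda>x. h x * b (rr x)) \<in> Cc"
proof -
  have sub: "fsupp (\<lambda>x. h x * b (rr x)) \<subseteq> fsupp h" unfolding fsupp_def by (rule closure_mono) auto
  have "closed (fsupp (\<lambda>x. h x * b (rr x)))" by (simp add: fsupp_def)
  then have "compact (fsupp (\<lambda>x. h x * b (rr x)))" using compact_closed_sub[OF Cc_compact[OF h] _ sub] by blast
  moreover have "continuous_on UNIV (\<lambda>x. h x * b (rr x))"
    by (rule continuous_on_mult[OF Cc_cont[OF h] comp_rr_cont[OF b]])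
  ultimately show ?thesis by (simp add: Cc_def)
qed

end


locale GPhi = GP G2 gmul ginv lam + Nf \<Phi>
  for G2 :: "('g::{t2_space, second_countable_topology} \<times> 'g) set"
    and gmul ginv lam and \<Phi>
begin

lemma HB:
  assumes f: "f \<in> Cc"
  shows "\<exists>C\<ge>0. \<forall>u\<in>G0. (\<integral>\<^sup>+y. ennreal (\<Phi> (1 * norm (restr gmul ginv u f y))) \<partial>lam u) \<le> ennreal C"
proof -
  define \<psi> where "\<psi> y = \<Phi> (norm (f y))" for y
  define \<psi>c where "\<psi>c y = complex_of_real (\<psi> y)" for y
  define K where "K = fsupp f"
  have cf: "continuous_on UNIV f" and K: "compact K" using f by (auto simp: Cc_def K_def)
  have c\<psi>: "continuous_on UNIV \<psi>"
    unfolding \<psi>_def[abs_def] by (rule continuous_on_compose2[OF cont continuous_on_norm[OF cf]]) auto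
  have \<psi>0: "\<psi> y \<noteq> 0 \<Longrightarrow> y \<in> K" for y
    using closure_subset[of "{x. f x \<noteq> 0}"] by (auto simp: \<psi>_def K_def fsupp_def)
  have \<psi>nn: "0 \<le> \<psi> y" for y by (simp add: \<psi>_def nonneg)
  have sub: "fsupp \<psi>c \<subseteq> K"
  proof -
    have "{x. \<psi>c x \<noteq> 0} \<subseteq> {x. f x \<noteq> 0}" by (auto simp: \<psi>c_def \<psi>_def)
    then show ?thesis unfolding fsupp_def K_def by (rule closure_mono)
  qed
  have "closed (fsupp \<psi>c)" by (simp add: fsupp_def)
  then have "compact (fsupp \<psi>c)" using compact_closed_sub[OF K _ sub] by blast
  moreover have "continuous_on UNIV \<psi>c" unfolding \<psi>c_def[abs_def] by (rule continuous_on_of_real[OF c\<psi>])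
  ultimately have "\<psi>c \<in> Cc" by (simp add: Cc_def)
  then have Fc: "continuous_on G0 (\<lambda>u. \<integral>y. \<psi>c y \<partial>lam u)"
    by (rule haar_cont)
  define rK where "rK = rr ` K"
  have rK: "compact rK" unfolding rK_def
    by (rule compact_continuous_image[OF continuous_on_subset[OF rr_cont] K]) simp
  have "compact ((\<lambda>u. \<integral>y. \<psi>c y \<partial>lam u) ` rK)"
    by (rule compact_continuous_image[OF continuous_on_subset[OF Fc] rK]) (auto simp: rK_def)
  from compact_imp_bounded[OF this] obtain C0 where
    "\<forall>x\<in>(\<lambda>u. \<integral>y. \<psi>c y \<partial>lam u) ` rK. norm x \<le> C0" unfolding bounded_iff by blast
  then have C0: "\<And>u. u \<in> rK \<Longrightarrow> norm (\<integral>y. \<psi>c y \<partial>lam u) \<le> C0" by blast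
  have "compact (\<psi> ` K)" by (rule compact_continuous_image[OF continuous_on_subset[OF c\<psi>] K]) simp
  from compact_imp_bounded[OF this] obtain B where "\<forall>x\<in>\<psi> ` K. norm x \<le> B"
    unfolding bounded_iff by blast
  then have B: "\<And>y. y \<in> K \<Longrightarrow> norm (\<psi> y) \<le> B" by blast
  show ?thesis
  proof (intro exI[of _ "max C0 0"] conjI ballI)
    fix u assume u: "u \<in> G0"
    have m\<psi>: "\<psi> \<in> borel_measurable (lam u)"
      by (rule meas_lam[OF u borel_measurable_continuous_onI[OF c\<psi>]])
    have int: "integrable (lam u) \<psi>"
    proof (rule integrableI_bounded_set[where A=K and B=B])
      show "K \<in> sets (lam u)" using u K by (simp add: sets_lam compact_imp_closed)
      show "emeasure (lam u) K < \<infinity>" by (rule fin_lam[OF u K])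
      show "\<psi> \<in> borel_measurable (lam u)" by (rule m\<psi>)
      show "AE x\<in>K in lam u. norm (\<psi> x) \<le> B" using B by (intro AE_I2) simp
      show "AE x in lam u. x \<notin> K \<longrightarrow> \<psi> x = 0" using \<psi>0 by (intro AE_I2) blast
    qed
    have "(\<integral>\<^sup>+y. ennreal (\<Phi> (1 * norm (restr gmul ginv u f y))) \<partial>lam u) \<le> (\<integral>\<^sup>+y. ennreal (\<psi> y) \<partial>lam u)"
      by (intro nn_integral_mono) (auto simp: restr_def \<psi>_def nonneg)
    also have "\<dots> = ennreal (\<integral>y. \<psi> y \<partial>lam u)"
      using int \<psi>nn by (intro nn_integral_eq_integral) auto
    also have "\<dots> \<le> ennreal (max C0 0)"
    proof (cases "u \<in> rK")
      case True
      have "(\<integral>y. \<psi> y \<partial>lam u) = norm (\<integral>y. \<psi>c y \<partial>lam u)"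
        using \<psi>nn by (simp add: \<psi>c_def integral_complex_of_real integral_nonneg)
      then show ?thesis using C0[OF True] by (intro ennreal_leI) auto
    next
      case False
      have "AE y in lam u. \<psi> y = 0"
      proof (rule AE_I'[OF null_off[OF u]])
        show "{x \<in> space (lam u). \<psi> x \<noteq> 0} \<subseteq> UNIV - {y. rr y = u}"
          using False \<psi>0 by (auto simp: rK_def)
      qed
      then have "(\<integral>y. \<psi> y \<partial>lam u) = 0" by (rule integral_eq_zero_AE)
      then show ?thesis by simp
    qed
    finally show "(\<integral>\<^sup>+y. ennreal (\<Phi> (1 * norm (restr gmul ginv u f y))) \<partial>lam u) \<le> ennreal (max C0 0)" .
  qed simp
qed

end

context GPhi begin

abbreviation "gs u f \<equiv> gset (lam u) \<Phi> (restr gmul ginv u f)"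
abbreviation "gn u f \<equiv> gauge_norm gmul ginv lam \<Phi> u f"
abbreviation "En \<xi> \<equiv> E0_norm gmul ginv lam \<Phi> \<xi>"

lemma G0_ne: "G0 \<noteq> {}" by (simp add: unit_space_def)

lemma gn_nonneg: "gs u f \<noteq> {} \<Longrightarrow> 0 \<le> gn u f"
  unfolding gauge_norm_gset by (rule gset_nonneg)

lemma gn_cmp:
  assumes ne: "gs u f \<noteq> {}" and c: "0 \<le> c" and le: "\<And>y. rr y = u \<Longrightarrow> norm (f' y) \<le> c * norm (f y)"
  shows "gs u f' \<noteq> {}" "gn u f' \<le> c * gn u f"
proof -
  have le': "norm (restr gmul ginv u f' y) \<le> c * norm (restr gmul ginv u f y)" for y
    using le[of y] by (cases "rr y = u") (auto simp: restr_def)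
  show "gs u f' \<noteq> {}" by (rule gset_cmp(1)[OF ne c le'])
  show "gn u f' \<le> c * gn u f" unfolding gauge_norm_gset by (rule gset_cmp(2)[OF ne c le'])
qed

lemma gn_tri:
  assumes ne1: "gs u f1 \<noteq> {}" and ne2: "gs u f2 \<noteq> {}"
    and m1: "restr gmul ginv u f1 \<in> borel_measurable (lam u)"
    and m2: "restr gmul ginv u f2 \<in> borel_measurable (lam u)"
    and le: "\<And>y. rr y = u \<Longrightarrow> norm (f y) \<le> norm (f1 y) + norm (f2 y)"
  shows "gs u f \<noteq> {}" "gn u f \<le> gn u f1 + gn u f2"
proof -
  have le': "norm (restr gmul ginv u f y) \<le> norm (restr gmul ginv u f1 y) + norm (restr gmul ginv u f2 y)" for y
    using le[of y] by (cases "rr y = u") (auto simp: restr_def)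
  show "gs u f \<noteq> {}" by (rule gset_tri(1)[OF ne1 ne2 m1 m2 le'])
  show "gn u f \<le> gn u f1 + gn u f2" unfolding gauge_norm_gset by (rule gset_tri(2)[OF ne1 ne2 m1 m2 le'])
qed

lemma gn_scale:
  assumes ne: "gs u f \<noteq> {}" and eq: "\<And>y. rr y = u \<Longrightarrow> f' y = c * f y"
  shows "gs u f' \<noteq> {}" "gn u f' = norm c * gn u f"
proof -
  have le: "norm (f' y) \<le> norm c * norm (f y)" if "rr y = u" for y
    using eq[OF that] by (simp add: norm_mult)
  show ne': "gs u f' \<noteq> {}" by (rule gn_cmp(1)[OF ne norm_ge_zero le])
  have A: "gn u f' \<le> norm c * gn u f" by (rule gn_cmp(2)[OF ne norm_ge_zero le])
  show "gn u f' = norm c * gn u f"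
  proof (cases "c = 0")
    case True
    then show ?thesis using A gn_nonneg[OF ne'] by simp
  next
    case False
    have le2: "norm (f y) \<le> (1 / norm c) * norm (f' y)" if "rr y = u" for y
      using eq[OF that] False by (simp add: norm_mult)
    have "gn u f \<le> (1 / norm c) * gn u f'" by (rule gn_cmp(2)[OF ne' _ le2]) simp
    then have "norm c * gn u f \<le> gn u f'" using False by (simp add: field_simps)
    then show ?thesis using A by simp
  qed
qed

lemma Cc_gn: assumes f: "f \<in> Cc" shows "\<exists>B. \<forall>u\<in>G0. gs u f \<noteq> {} \<and> gn u f \<le> B"
proof -
  obtain C where C: "0 \<le> C" "\<And>u. u \<in> G0 \<Longrightarrow> (\<integral>\<^sup>+y. ennreal (\<Phi> (1 * norm (restr gmul ginv u f y))) \<partial>lam u) \<le> ennreal C"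
    using HB[OF f] by blast
  have "gs u f \<noteq> {} \<and> gn u f \<le> max 1 C / 1" if u: "u \<in> G0" for u
  proof -
    have k: "max 1 C / 1 \<in> gs u f"
      by (rule gset_bound[OF _ C(1) restr_meas[OF u Cc_meas[OF u f]] C(2)[OF u]]) simp
    then show ?thesis unfolding gauge_norm_gset using gset_le[OF k] by blast
  qed
  then show ?thesis by blast
qed

lemma E0_ne:
  assumes xi: "\<xi> \<in> E0 gmul ginv lam \<Phi>" and u: "u \<in> G0"
  shows "gs u (\<xi> u) \<noteq> {}" "restr gmul ginv u (\<xi> u) \<in> borel_measurable (lam u)"
proof -
  have io: "in_orlicz gmul ginv lam \<Phi> u (\<xi> u)" using xi u by (simp add: E0_def)
  then show m: "restr gmul ginv u (\<xi> u) \<in> borel_measurable (lam u)" by (simp add: in_orlicz_def)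
  from io obtain \<alpha> where a: "0 < \<alpha>"
    "(\<integral>\<^sup>+y. ennreal (\<Phi> (\<alpha> * norm (restr gmul ginv u (\<xi> u) y))) \<partial>lam u) < \<infinity>"
    by (auto simp: in_orlicz_def)
  then obtain C where C: "0 \<le> C" "(\<integral>\<^sup>+y. ennreal (\<Phi> (\<alpha> * norm (restr gmul ginv u (\<xi> u) y))) \<partial>lam u) = ennreal C"
    by (cases "(\<integral>\<^sup>+y. ennreal (\<Phi> (\<alpha> * norm (restr gmul ginv u (\<xi> u) y))) \<partial>lam u)" rule: ennreal_cases) auto
  have "max 1 C / \<alpha> \<in> gs u (\<xi> u)" by (rule gset_bound[OF a(1) C(1) m]) (simp add: C(2))
  then show "gs u (\<xi> u) \<noteq> {}" by blast
qed

lemma E0_compact: "\<xi> \<in> E0 gmul ginv lam \<Phi> \<Longrightarrow> 0 < e \<Longrightarrow> compact {u\<in>G0. e \<le> gn u (\<xi> u)}"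
  by (simp add: E0_def)

lemma E0_bdd: assumes xi: "\<xi> \<in> E0 gmul ginv lam \<Phi>" shows "\<exists>B. \<forall>u\<in>G0. gn u (\<xi> u) \<le> B"
proof -
  define K where "K n = {u\<in>G0. real n + 1 \<le> gn u (\<xi> u)}" for n :: nat
  have Kc: "compact (K n)" for n unfolding K_def by (rule E0_compact[OF xi]) simp
  have "K 0 \<subseteq> \<Union>((\<lambda>n. - K n) ` UNIV)"
  proof
    fix u assume "u \<in> K 0"
    obtain n :: nat where "gn u (\<xi> u) < real n" using reals_Archimedean2 by blast
    then have "u \<notin> K n" by (simp add: K_def)
    then show "u \<in> \<Union>((\<lambda>n. - K n) ` UNIV)" by blast
  qed
  then obtain C' where C': "finite C'" "K 0 \<subseteq> \<Union>((\<lambda>n. - K n) ` C')"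
    using compactE_image[OF Kc[of 0], of UNIV "\<lambda>n. - K n"] Kc compact_imp_closed
    by (metis open_Compl subset_UNIV)
  define N where "N = Max (insert 0 C')"
  have mono: "K m \<subseteq> K n" if "n \<le> m" for n m using that by (auto simp: K_def)
  have "K 0 \<subseteq> - K N"
  proof
    fix u assume u: "u \<in> K 0"
    then obtain n where n: "n \<in> C'" "u \<notin> K n" using C'(2) by blast
    have "n \<le> N" using C'(1) n(1) by (simp add: N_def)
    then show "u \<in> - K N" using mono[of n N] n(2) by blast
  qed
  then have "K N = {}" using mono[of 0 N] by blast
  then have "\<forall>u\<in>G0. gn u (\<xi> u) \<le> real N + 1" by (force simp: K_def)
  then show ?thesis by blast
qed

lemma in_orlicz_of:
  assumes ne: "gs u f \<noteq> {}" and m: "restr gmul ginv u f \<in> borel_measurable (lam u)"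
  shows "in_orlicz gmul ginv lam \<Phi> u f"
proof -
  obtain k where k: "k \<in> gs u f" using ne by blast
  then have k0: "0 < k" by (simp add: gset_def)
  have "(\<integral>\<^sup>+y. ennreal (\<Phi> ((1/k) * norm (restr gmul ginv u f y))) \<partial>lam u)
      = (\<integral>\<^sup>+y. ennreal (\<Phi> (norm (restr gmul ginv u f y) / k)) \<partial>lam u)" by simp
  also have "\<dots> \<le> 1" using k by (simp add: gset_def)
  also have "\<dots> < \<infinity>" by simp
  finally show ?thesis using m k0 unfolding in_orlicz_def by (intro conjI exI[of _ "1/k"]) auto
qed

lemma En_le: "(\<And>u. u \<in> G0 \<Longrightarrow> gn u (\<xi> u) \<le> c) \<Longrightarrow> En \<xi> \<le> c"
  unfolding E0_norm_def by (rule cSUP_least[OF G0_ne])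

lemma En_ge: "(\<And>u. u \<in> G0 \<Longrightarrow> gn u (\<xi> u) \<le> B) \<Longrightarrow> u \<in> G0 \<Longrightarrow> gn u (\<xi> u) \<le> En \<xi>"
  unfolding E0_norm_def by (rule cSUP_upper) (auto simp: bdd_above_def)

lemma En_nonneg: assumes xi: "\<xi> \<in> E0 gmul ginv lam \<Phi>" shows "0 \<le> En \<xi>"
proof -
  obtain B where B: "\<forall>u\<in>G0. gn u (\<xi> u) \<le> B" using E0_bdd[OF xi] by blast
  define x :: 'g where "x = undefined"
  have u: "rr x \<in> G0" by simp
  have "0 \<le> gn (rr x) (\<xi> (rr x))" by (rule gn_nonneg[OF E0_ne(1)[OF xi u]])
  also have "\<dots> \<le> En \<xi>" using B by (intro En_ge[OF _ u]) auto
  finally show ?thesis .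
qed

lemma Cc_diff:
  assumes xi: "\<xi> \<in> E0 gmul ginv lam \<Phi>" and f: "f \<in> Cc"
  shows "\<exists>B. \<forall>u\<in>G0. gs u (\<lambda>y. \<xi> u y - f y) \<noteq> {} \<and> gn u (\<lambda>y. \<xi> u y - f y) \<le> B"
proof -
  obtain B1 where B1: "\<forall>u\<in>G0. gn u (\<xi> u) \<le> B1" using E0_bdd[OF xi] by blast
  obtain B2 where B2: "\<forall>u\<in>G0. gs u f \<noteq> {} \<and> gn u f \<le> B2" using Cc_gn[OF f] by blast
  have "gs u (\<lambda>y. \<xi> u y - f y) \<noteq> {} \<and> gn u (\<lambda>y. \<xi> u y - f y) \<le> B1 + B2" if u: "u \<in> G0" for u
  proof -
    note T = gn_tri[OF E0_ne(1)[OF xi u] B2[rule_format, OF u, THEN conjunct1] E0_ne(2)[OF xi u]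
        restr_meas[OF u Cc_meas[OF u f]], of "\<lambda>y. \<xi> u y - f y"]
    have "norm (\<xi> u y - f y) \<le> norm (\<xi> u y) + norm (f y)" for y by (rule norm_triangle_ineq4)
    then have "gs u (\<lambda>y. \<xi> u y - f y) \<noteq> {}" "gn u (\<lambda>y. \<xi> u y - f y) \<le> gn u (\<xi> u) + gn u f"
      using T by auto
    then show ?thesis using B1 B2 u by force
  qed
  then show ?thesis by blast
qed

lemma Cc_mult:
  assumes b: "continuous_on G0 b" and f: "f \<in> Cc"
  shows "(\<lambda>y. b (rr y) * f y) \<in> Cc" "fsupp (\<lambda>y. b (rr y) * f y) \<subseteq> fsupp f"
proof -
  show sub: "fsupp (\<lambda>y. b (rr y) * f y) \<subseteq> fsupp f"
    unfolding fsupp_def by (rule closure_mono) auto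
  have "closed (fsupp (\<lambda>y. b (rr y) * f y))" by (simp add: fsupp_def)
  then have "compact (fsupp (\<lambda>y. b (rr y) * f y))"
    using compact_closed_sub[OF Cc_compact[OF f] _ sub] by blast
  moreover have "continuous_on UNIV (\<lambda>y. b (rr y) * f y)"
    by (rule continuous_on_mult[OF comp_rr_cont[OF b] Cc_cont[OF f]])
  ultimately show "(\<lambda>y. b (rr y) * f y) \<in> Cc" by (simp add: Cc_def)
qed



lemma mult_E0P:
  assumes xi: "\<xi> \<in> E0P gmul ginv lam \<Phi> P" and bc: "continuous_on G0 b" and M: "0 < M"
    and bM: "\<And>u. u \<in> G0 \<Longrightarrow> norm (b u) \<le> M"
  shows "(\<lambda>u y. b u * \<xi> u y) \<in> E0P gmul ginv lam \<Phi> P" "En (\<lambda>u y. b u * \<xi> u y) \<le> M * En \<xi>"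
proof -
  define \<eta> where "\<eta> = (\<lambda>u y. b u * \<xi> u y)"
  have xiE: "\<xi> \<in> E0 gmul ginv lam \<Phi>" using xi by (simp add: E0P_def)
  have sc: "gs u (\<eta> u) \<noteq> {} \<and> gn u (\<eta> u) = norm (b u) * gn u (\<xi> u)" if u: "u \<in> G0" for u
    using gn_scale[OF E0_ne(1)[OF xiE u], of "\<eta> u" "b u"] by (simp add: \<eta>_def)
  obtain Bx where Bx: "\<And>u. u \<in> G0 \<Longrightarrow> gn u (\<xi> u) \<le> Bx" using E0_bdd[OF xiE] by blast
  have gx0: "0 \<le> gn u (\<xi> u)" if u: "u \<in> G0" for u by (rule gn_nonneg[OF E0_ne(1)[OF xiE u]])
  have h1: "\<forall>u\<in>G0. in_orlicz gmul ginv lam \<Phi> u (\<eta> u)"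
  proof
    fix u assume u: "u \<in> G0"
    have "restr gmul ginv u (\<eta> u) = (\<lambda>y. b u * restr gmul ginv u (\<xi> u) y)"
      by (auto simp: restr_def \<eta>_def fun_eq_iff)
    moreover have "(\<lambda>y. b u * restr gmul ginv u (\<xi> u) y) \<in> borel_measurable (lam u)"
      using E0_ne(2)[OF xiE u] by (intro borel_measurable_times) auto
    ultimately have "restr gmul ginv u (\<eta> u) \<in> borel_measurable (lam u)" by simp
    then show "in_orlicz gmul ginv lam \<Phi> u (\<eta> u)" by (rule in_orlicz_of[OF sc[OF u, THEN conjunct1]])
  qed
  have h2: "\<forall>u0\<in>G0. \<forall>e>0. \<exists>f\<in>Cc. \<exists>U. open U \<and> u0 \<in> U \<and>
        (\<forall>u\<in>U \<inter> G0. gn u (\<lambda>y. \<eta> u y - f y) < e)"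
  proof (intro ballI allI impI)
    fix u0 e assume u0: "u0 \<in> G0" and e: "(0::real) < e"
    have "\<forall>u0\<in>G0. \<forall>e>0. \<exists>f\<in>Cc. \<exists>U. open U \<and> u0 \<in> U \<and>
        (\<forall>u\<in>U \<inter> G0. gn u (\<lambda>y. \<xi> u y - f y) < e)" using xiE by (simp add: E0_def)
    then obtain f U where f: "f \<in> Cc" "open U" "u0 \<in> U"
      "\<And>u. u \<in> U \<inter> G0 \<Longrightarrow> gn u (\<lambda>y. \<xi> u y - f y) < e / M"
      using u0 e M by (meson divide_pos_pos)
    obtain Bd where Bd: "\<forall>u\<in>G0. gs u (\<lambda>y. \<xi> u y - f y) \<noteq> {} \<and> gn u (\<lambda>y. \<xi> u y - f y) \<le> Bd"
      using Cc_diff[OF xiE f(1)] by blast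
    show "\<exists>f\<in>Cc. \<exists>U. open U \<and> u0 \<in> U \<and> (\<forall>u\<in>U \<inter> G0. gn u (\<lambda>y. \<eta> u y - f y) < e)"
    proof (intro bexI[of _ "\<lambda>y. b (rr y) * f y"] exI[of _ U] conjI ballI)
      show "(\<lambda>y. b (rr y) * f y) \<in> Cc" by (rule Cc_mult(1)[OF bc f(1)])
      show "open U" "u0 \<in> U" by (rule f(2), rule f(3))
      fix u assume u: "u \<in> U \<inter> G0"
      have le: "norm (\<eta> u y - b (rr y) * f y) \<le> M * norm (\<xi> u y - f y)" if "rr y = u" for y
      proof -
        have "\<eta> u y - b (rr y) * f y = b u * (\<xi> u y - f y)" using that by (simp add: \<eta>_def algebra_simps)
        then show ?thesis using bM[of u] u by (simp add: norm_mult mult_right_mono)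
      qed
      have "gn u (\<lambda>y. \<eta> u y - b (rr y) * f y) \<le> M * gn u (\<lambda>y. \<xi> u y - f y)"
        by (rule gn_cmp(2)[OF _ _ le]) (use Bd u M in auto)
      also have "\<dots> < M * (e / M)" by (rule mult_strict_left_mono[OF f(4)[OF u] M])
      also have "\<dots> = e" using M by simp
      finally show "gn u (\<lambda>y. \<eta> u y - b (rr y) * f y) < e" .
    qed
  qed
  have h3: "\<forall>e>0. compact {u\<in>G0. gn u (\<eta> u) \<ge> e}"
  proof (intro allI impI)
    fix e :: real assume e: "0 < e"
    define S where "S = {u\<in>G0. e \<le> gn u (\<eta> u)}"
    define K where "K = {u\<in>G0. e / M \<le> gn u (\<xi> u)}"
    have K: "compact K" unfolding K_def by (rule E0_compact[OF xiE]) (use e M in simp)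
    have SK: "S \<subseteq> K"
    proof
      fix u assume "u \<in> S"
      then have u: "u \<in> G0" and "e \<le> norm (b u) * gn u (\<xi> u)" using sc by (auto simp: S_def)
      moreover have "norm (b u) * gn u (\<xi> u) \<le> M * gn u (\<xi> u)"
        using bM[OF u] gx0[OF u] by (rule mult_right_mono)
      ultimately have "e \<le> M * gn u (\<xi> u)" by linarith
      then show "u \<in> K" using u M by (simp add: K_def field_simps)
    qed
    define C where "C = - \<Union>{V. open V \<and> V \<inter> S = {}}"
    have Cc: "closed C" unfolding C_def by (intro closed_Compl open_Union) auto
    have "K \<inter> C \<subseteq> S"
    proof
      fix u assume uKC: "u \<in> K \<inter> C"
      show "u \<in> S"
      proof (rule ccontr)
        assume nS: "u \<notin> S"
        have u: "u \<in> G0" and gu: "e / M \<le> gn u (\<xi> u)" using uKC by (auto simp: K_def)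
        have gpos: "0 < gn u (\<xi> u)" using gu e M by (smt (verit) divide_pos_pos)
        have lt: "norm (b u) * gn u (\<xi> u) < e" using nS sc[OF u] u by (auto simp: S_def)
        define \<delta> where "\<delta> = (e - norm (b u) * gn u (\<xi> u)) / (norm (b u) + 1)"
        have np: "0 < norm (b u) + 1" using norm_ge_zero[of "b u"] by linarith
        have \<delta>: "0 < \<delta>" unfolding \<delta>_def using lt np by (intro divide_pos_pos) auto
        define t where "t = gn u (\<xi> u) + \<delta>"
        have t: "0 < t" "gn u (\<xi> u) < t" using gpos \<delta> by (auto simp: t_def)
        have "norm (b u) * \<delta> < e - norm (b u) * gn u (\<xi> u)"
        proof -
          have "norm (b u) * \<delta> = (e - norm (b u) * gn u (\<xi> u)) * (norm (b u) / (norm (b u) + 1))"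
            by (simp add: \<delta>_def)
          also have "\<dots> < (e - norm (b u) * gn u (\<xi> u)) * 1"
            using lt np by (intro mult_strict_left_mono) auto
          finally show ?thesis by simp
        qed
        then have bt: "norm (b u) * t < e" by (simp add: t_def algebra_simps)
        define W where "W = - {v\<in>G0. t \<le> gn v (\<xi> v)}"
        have W: "open W" unfolding W_def
          by (intro open_Compl compact_imp_closed E0_compact[OF xiE t(1)])
        obtain A where A: "open A" "A \<inter> G0 = b -` ball 0 (e / t) \<inter> G0"
          using continuous_on_open_invariant[THEN iffD1, OF bc, rule_format, OF open_ball] by blast
        have "u \<in> W" using t(2) by (auto simp: W_def)
        moreover have "u \<in> A"
        proof -
          have "norm (b u) < e / t" using bt t(1) by (simp add: field_simps)
          then have "u \<in> A \<inter> G0" using A(2) u by (simp add: mem_ball_0)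
          then show ?thesis by blast
        qed
        moreover have "(W \<inter> A) \<inter> S = {}"
        proof (rule ccontr)
          assume "(W \<inter> A) \<inter> S \<noteq> {}"
          then obtain v where v: "v \<in> W" "v \<in> A" "v \<in> S" by blast
          have vG: "v \<in> G0" using v(3) by (simp add: S_def)
          have gv: "gn v (\<xi> v) < t" using v(1) vG by (auto simp: W_def)
          have "b v \<in> ball 0 (e / t)" using v(2) vG A(2) by blast
          then have bv: "norm (b v) < e / t" by (simp add: mem_ball_0)
          have "e \<le> norm (b v) * gn v (\<xi> v)" using v(3) sc[OF vG] by (simp add: S_def)
          also have "\<dots> \<le> norm (b v) * t" using gv by (intro mult_left_mono) auto
          also have "\<dots> < (e / t) * t" using bv t(1) by (intro mult_strict_right_mono) auto
          also have "\<dots> = e" using t(1) by simp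
          finally show False by simp
        qed
        moreover have "open (W \<inter> A)" using W A(1) by blast
        ultimately have "u \<notin> C" unfolding C_def by blast
        then show False using uKC by blast
      qed
    qed
    moreover have "S \<subseteq> C" unfolding C_def by blast
    ultimately have "S = K \<inter> C" using SK by blast
    then have "compact S" using compact_Int_closed[OF K Cc] by simp
    then show "compact {u\<in>G0. gn u (\<eta> u) \<ge> e}" by (simp add: S_def)
  qed
  have etaE: "\<eta> \<in> E0 gmul ginv lam \<Phi>" unfolding E0_def using h1 h2 h3 by blast
  have h4: "\<forall>e>0. \<exists>f\<in>Cc. fsupp f \<subseteq> P \<and> En (\<lambda>u y. \<eta> u y - f y) < e"
  proof (intro allI impI)
    fix e :: real assume e: "0 < e"
    have "\<forall>e>0. \<exists>f\<in>Cc. fsupp f \<subseteq> P \<and> En (\<lambda>u y. \<xi> u y - f y) < e" using xi by (simp add: E0P_def)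
    then obtain f where f: "f \<in> Cc" "fsupp f \<subseteq> P" "En (\<lambda>u y. \<xi> u y - f y) < e / M"
      using e M by (meson divide_pos_pos)
    obtain Bd where Bd: "\<forall>u\<in>G0. gs u (\<lambda>y. \<xi> u y - f y) \<noteq> {} \<and> gn u (\<lambda>y. \<xi> u y - f y) \<le> Bd"
      using Cc_diff[OF xiE f(1)] by blast
    have "En (\<lambda>u y. \<eta> u y - b (rr y) * f y) \<le> M * En (\<lambda>u y. \<xi> u y - f y)"
    proof (rule En_le)
      fix u assume u: "u \<in> G0"
      have le: "norm (\<eta> u y - b (rr y) * f y) \<le> M * norm (\<xi> u y - f y)" if "rr y = u" for y
      proof -
        have "\<eta> u y - b (rr y) * f y = b u * (\<xi> u y - f y)" using that by (simp add: \<eta>_def algebra_simps)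
        then show ?thesis using bM[of u] u by (simp add: norm_mult mult_right_mono)
      qed
      have "gn u (\<lambda>y. \<eta> u y - b (rr y) * f y) \<le> M * gn u (\<lambda>y. \<xi> u y - f y)"
        by (rule gn_cmp(2)[OF _ _ le]) (use Bd u M in auto)
      also have "\<dots> \<le> M * En (\<lambda>u y. \<xi> u y - f y)"
        using M Bd u by (intro mult_left_mono En_ge[of "\<lambda>u y. \<xi> u y - f y" Bd]) auto
      finally show "gn u (\<lambda>y. \<eta> u y - b (rr y) * f y) \<le> M * En (\<lambda>u y. \<xi> u y - f y)" .
    qed
    also have "\<dots> < M * (e / M)" by (rule mult_strict_left_mono[OF f(3) M])
    also have "\<dots> = e" using M by simp
    finally have "En (\<lambda>u y. \<eta> u y - b (rr y) * f y) < e" .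
    moreover have "fsupp (\<lambda>y. b (rr y) * f y) \<subseteq> P" using Cc_mult(2)[OF bc f(1)] f(2) by blast
    ultimately show "\<exists>f\<in>Cc. fsupp f \<subseteq> P \<and> En (\<lambda>u y. \<eta> u y - f y) < e"
      using Cc_mult(1)[OF bc f(1)] by blast
  qed
  show "(\<lambda>u y. b u * \<xi> u y) \<in> E0P gmul ginv lam \<Phi> P"
    using etaE h4 unfolding \<eta>_def E0P_def by blast
  show "En (\<lambda>u y. b u * \<xi> u y) \<le> M * En \<xi>"
  proof (rule En_le)
    fix u assume u: "u \<in> G0"
    have "gn u (\<eta> u) = norm (b u) * gn u (\<xi> u)" using sc[OF u] by simp
    also have "\<dots> \<le> M * gn u (\<xi> u)" using bM[OF u] gx0[OF u] by (rule mult_right_mono)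
    also have "\<dots> \<le> M * En \<xi>" using M Bx u by (intro mult_left_mono En_ge[of \<xi> Bx]) auto
    finally show "gn u ((\<lambda>u y. b u * \<xi> u y) u) \<le> M * En \<xi>" by (simp add: \<eta>_def)
  qed
qed

end


lemma conv_left:
  "conv_check gmul ginv lam g (\<lambda>u y. c u * f u y) x = c (gd gmul ginv x) * conv_check gmul ginv lam g f x"
  unfolding conv_check_def
  by (subst integral_mult_right_zero[symmetric]) (rule Bochner_Integration.integral_cong, auto)

lemma conv_right:
  "conv_check gmul ginv lam (\<lambda>u y. c u * g u y) f x = c (gr gmul ginv x) * conv_check gmul ginv lam g f x"
  unfolding conv_check_def
  by (subst integral_mult_right_zero[symmetric]) (rule Bochner_Integration.integral_cong, auto)

theorem lemma4p2:
  fixes G2 :: "('g::{t2_space, second_countable_topology} \<times> 'g) set"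
    and gmul :: "'g \<Rightarrow> 'g \<Rightarrow> 'g" and ginv :: "'g \<Rightarrow> 'g"
    and lam :: "'g \<Rightarrow> 'g measure"
    and \<Phi> \<Psi> :: "real \<Rightarrow> real"
  assumes "locally_compact_space (euclidean :: 'g topology)"
    and "topological_groupoid G2 gmul ginv"
    and "left_haar_system gmul ginv lam"
    and "N_function \<Phi>" and "\<Psi> = complementary \<Phi>" and "N_function \<Psi>"
    and "delta2 (compact (UNIV :: 'g set)) \<Phi>" and "delta2 (compact (UNIV :: 'g set)) \<Psi>"
  shows "\<forall>b \<in> C0_on (unit_space gmul ginv). \<forall>h \<in> A_check gmul ginv lam \<Phi>.
           (\<lambda>x. b (gd gmul ginv x) * h x) \<in> A_check gmul ginv lam \<Phi> \<and>
           (\<lambda>x. h x * b (gr gmul ginv x)) \<in> A_check gmul ginv lam \<Phi>"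
proof (intro ballI conjI)
  fix b h assume b: "b \<in> C0_on (unit_space gmul ginv)" and h: "h \<in> A_check gmul ginv lam \<Phi>"
  interpret A: GPhi G2 gmul ginv lam \<Phi> by unfold_locales (use assms in auto)
  interpret B: GPhi G2 gmul ginv lam \<Psi> by unfold_locales (use assms in auto)
  have cP: "complementary \<Phi> = \<Psi>" using assms(5) by simp
  from h obtain P fs gs where P: "P \<in> K_sets gmul ginv" and hC: "h \<in> Cc"
    and fs: "\<And>n. fs n \<in> E0P gmul ginv lam \<Phi> P" and gs: "\<And>n. gs n \<in> E0P gmul ginv lam \<Psi> P"
    and sm: "summable (\<lambda>n. E0_norm gmul ginv lam \<Phi> (fs n) * E0_norm gmul ginv lam \<Psi> (gs n))"
    and su: "\<And>x. (\<lambda>n. conv_check gmul ginv lam (gs n) (fs n) x) sums h x"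
    unfolding A_check_def A_check_P_def cP by blast
  obtain M where M: "0 < M" "\<And>u. u \<in> unit_space gmul ginv \<Longrightarrow> norm (b u) \<le> M"
    using A.C0_bound[OF b] by blast
  have bc: "continuous_on (unit_space gmul ginv) b" using b by (simp add: C0_on_def)
  have fsE: "fs n \<in> E0 gmul ginv lam \<Phi>" for n using fs[of n] by (simp add: E0P_def)
  have gsE: "gs n \<in> E0 gmul ginv lam \<Psi>" for n using gs[of n] by (simp add: E0P_def)
  have fs': "(\<lambda>u y. b u * fs n u y) \<in> E0P gmul ginv lam \<Phi> P" for n
    by (rule A.mult_E0P(1)[OF fs bc M])
  have sm': "summable (\<lambda>n. E0_norm gmul ginv lam \<Phi> (\<lambda>u y. b u * fs n u y) * E0_norm gmul ginv lam \<Psi> (gs n))"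
  proof (rule summable_comparison_test[OF _ summable_mult[OF sm, of M]])
    show "\<exists>N. \<forall>n\<ge>N. norm (E0_norm gmul ginv lam \<Phi> (\<lambda>u y. b u * fs n u y) * E0_norm gmul ginv lam \<Psi> (gs n))
        \<le> M * (E0_norm gmul ginv lam \<Phi> (fs n) * E0_norm gmul ginv lam \<Psi> (gs n))"
    proof (intro exI allI impI)
      fix n :: nat
      have x0: "0 \<le> E0_norm gmul ginv lam \<Phi> (\<lambda>u y. b u * fs n u y)"
        using fs'[of n] by (intro A.En_nonneg) (simp add: E0P_def)
      have y0: "0 \<le> E0_norm gmul ginv lam \<Psi> (gs n)" by (rule B.En_nonneg[OF gsE])
      have "E0_norm gmul ginv lam \<Phi> (\<lambda>u y. b u * fs n u y) * E0_norm gmul ginv lam \<Psi> (gs n)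
          \<le> (M * E0_norm gmul ginv lam \<Phi> (fs n)) * E0_norm gmul ginv lam \<Psi> (gs n)"
        by (rule mult_right_mono[OF A.mult_E0P(2)[OF fs bc M] y0])
      then show "norm (E0_norm gmul ginv lam \<Phi> (\<lambda>u y. b u * fs n u y) * E0_norm gmul ginv lam \<Psi> (gs n))
        \<le> M * (E0_norm gmul ginv lam \<Phi> (fs n) * E0_norm gmul ginv lam \<Psi> (gs n))"
        using x0 y0 by (simp add: mult.assoc)
    qed
  qed
  have su': "(\<lambda>n. conv_check gmul ginv lam (gs n) (\<lambda>u y. b u * fs n u y) x) sums (b (gd gmul ginv x) * h x)" for x
    unfolding conv_left by (rule sums_mult[OF su])
  have "(\<lambda>x. b (gd gmul ginv x) * h x) \<in> A_check_P gmul ginv lam \<Phi> P"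
    unfolding A_check_P_def cP using A.Cc_left[OF bc hC] fs' gs sm' su'
    by (intro CollectI conjI exI[of _ "\<lambda>n u y. b u * fs n u y"] exI[of _ gs]) auto
  then show "(\<lambda>x. b (gd gmul ginv x) * h x) \<in> A_check gmul ginv lam \<Phi>"
    unfolding A_check_def using P by blast
  have gs': "(\<lambda>u y. b u * gs n u y) \<in> E0P gmul ginv lam \<Psi> P" for n
    by (rule B.mult_E0P(1)[OF gs bc M])
  have sm2: "summable (\<lambda>n. E0_norm gmul ginv lam \<Phi> (fs n) * E0_norm gmul ginv lam \<Psi> (\<lambda>u y. b u * gs n u y))"
  proof (rule summable_comparison_test[OF _ summable_mult[OF sm, of M]])
    show "\<exists>N. \<forall>n\<ge>N. norm (E0_norm gmul ginv lam \<Phi> (fs n) * E0_norm gmul ginv lam \<Psi> (\<lambda>u y. b u * gs n u y))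
        \<le> M * (E0_norm gmul ginv lam \<Phi> (fs n) * E0_norm gmul ginv lam \<Psi> (gs n))"
    proof (intro exI allI impI)
      fix n :: nat
      have x0: "0 \<le> E0_norm gmul ginv lam \<Phi> (fs n)" by (rule A.En_nonneg[OF fsE])
      have y0: "0 \<le> E0_norm gmul ginv lam \<Psi> (\<lambda>u y. b u * gs n u y)"
        using gs'[of n] by (intro B.En_nonneg) (simp add: E0P_def)
      have "E0_norm gmul ginv lam \<Phi> (fs n) * E0_norm gmul ginv lam \<Psi> (\<lambda>u y. b u * gs n u y)
          \<le> E0_norm gmul ginv lam \<Phi> (fs n) * (M * E0_norm gmul ginv lam \<Psi> (gs n))"
        by (rule mult_left_mono[OF B.mult_E0P(2)[OF gs bc M] x0])
      then show "norm (E0_norm gmul ginv lam \<Phi> (fs n) * E0_norm gmul ginv lam \<Psi> (\<lambda>u y. b u * gs n u y))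
        \<le> M * (E0_norm gmul ginv lam \<Phi> (fs n) * E0_norm gmul ginv lam \<Psi> (gs n))"
        using x0 y0 by (simp add: mult.left_commute)
    qed
  qed
  have su2: "(\<lambda>n. conv_check gmul ginv lam (\<lambda>u y. b u * gs n u y) (fs n) x) sums (h x * b (gr gmul ginv x))" for x
    unfolding conv_right mult.commute[of "h x"] by (rule sums_mult[OF su])
  have "(\<lambda>x. h x * b (gr gmul ginv x)) \<in> A_check_P gmul ginv lam \<Phi> P"
    unfolding A_check_P_def cP using A.Cc_right[OF bc hC] fs gs' sm2 su2
    by (intro CollectI conjI exI[of _ fs] exI[of _ "\<lambda>n u y. b u * gs n u y"]) auto
  then show "(\<lambda>x. h x * b (gr gmul ginv x)) \<in> A_check gmul ginv lam \<Phi>"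
    unfolding A_check_def using P by blast
qed

end
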